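(* Let $s\in(0,1)$, $\kappa>0$, and let $\mathcal{T}$ and $|\cdot|$ be as in the context. (i) If $s\le 3/4$, then (for every $\kappa>0$) there is $\tau\in\mathcal{T}\setminus\{\Xi\}$ with $|\tau|\le|\Xi|$. (ii) If $s>3/4$, then there is $\kappa_0(s)>0$ such that for all $\kappa\in(0,\kappa_0)$ one has $|\Xi|<|\tau|$ for all $\tau\in\mathcal{T}\setminus\{\Xi\}$; moreover, in this case, for every $\beta\in\mathbb{R}$ the set $\mathcal{T}_{<\beta}:=\{\tau\in\mathcal{T}:|\tau|<\beta\}$ is finite.
   Context: Fix $d\ge1$. Consider formal symbols (non-planar decorated rooted trees): a noise symbol $\Xi$ and monomials $\mathbf{X}^k$, $k\in\mathbb{N}^{1+d}$ (with $\mathbf{1}:=\mathbf{X}^0$), together with abstract integration maps $\mathcal{I}$ and $\mathcal{I}_j$ ($j=1,\dots,d$) and a commutative, associative product (with unit $\mathbf{1}$, and $\mathbf{X}^k\mathbf{X}^m=\mathbf{X}^{k+m}$). The set $\mathcal{T}$ is the smallest set containing $\Xi$ and all $\mathbf{X}^k$ such that whenever $\tau_1,\tau_2,\tau_3\in\mathcal{T}$, $j\in\{1,\dots,d\}$, $k\in\mathbb{N}^{1+d}$, the symbols $\mathbf{X}^k\mathcal{I}(\tau_1)$, $\mathbf{X}^k\mathcal{I}_j(\tau_1)$, $\mathbf{X}^k\mathcal{I}(\tau_1)\mathcal{I}(\tau_2)$ and $\mathcal{I}(\tau_1)\mathcal{I}(\tau_2)\mathcal{I}(\tau_3)$ belong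 to $\mathcal{T}$, with the convention that $\mathcal{I}(\mathbf{X}^k)=0$ (integration is not applied to pure monomials). Homogeneity: $|\Xi|:=-s-\frac32-\kappa$, $|\mathbf{X}^k|:=2sk_0+\sum_{i=1}^dk_i$, $|\mathcal{I}(\tau)|:=|\tau|+2s$, $|\mathcal{I}_j(\tau)|:=|\tau|+2s-1$, and the homogeneity of a product is the sum of the homogeneities of the factors. *)

theory Defs
  imports Complex_Main "HOL-Library.Multiset"
begin

text \<open>Symbols as non-planar decorated rooted trees.  A node carries a monomial
  exponent k (a function nat => nat, components 0..d used, component 0 = time)
  and a multiset of outgoing edges (j, subtree); edge label j = 0 means the
  integration map I, label j >= 1 means I_j.
  Using a multiset makes the product commutative and associative, and
  Node 0 {#} is the unit 1 = X^0.\<close>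

datatype sym = Xi | Node "nat \<Rightarrow> nat" "(nat \<times> sym) multiset"

definition monomial :: "(nat \<Rightarrow> nat) \<Rightarrow> sym" where
  "monomial k = Node k {#}"

definition is_monomial :: "sym \<Rightarrow> bool" where
  "is_monomial t \<longleftrightarrow> (\<exists>k. t = monomial k)"

definition valid_exp :: "nat \<Rightarrow> (nat \<Rightarrow> nat) \<Rightarrow> bool" where
  "valid_exp d k \<longleftrightarrow> (\<forall>i>d. k i = 0)"

text \<open>The set of symbols T (depending on the dimension d).  Integration is
  never applied to pure monomials (I(X^k) = 0).\<close>

inductive_set T :: "nat \<Rightarrow> sym set" for d :: nat where
  T_Xi: "Xi \<in> T d"
| T_mono: "valid_exp d k \<Longrightarrow> monomial k \<in> T d"
| T_I: "\<lbrakk>valid_exp d k; t1 \<in> T d; \<not> is_monomial t1\<rbrakk>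
          \<Longrightarrow> Node k {#(0, t1)#} \<in> T d"
| T_Ij: "\<lbrakk>valid_exp d k; 1 \<le> j; j \<le> d; t1 \<in> T d; \<not> is_monomial t1\<rbrakk>
          \<Longrightarrow> Node k {#(j, t1)#} \<in> T d"
| T_II: "\<lbrakk>valid_exp d k; t1 \<in> T d; \<not> is_monomial t1; t2 \<in> T d; \<not> is_monomial t2\<rbrakk>
          \<Longrightarrow> Node k {#(0, t1), (0, t2)#} \<in> T d"
| T_III: "\<lbrakk>t1 \<in> T d; \<not> is_monomial t1; t2 \<in> T d; \<not> is_monomial t2;
            t3 \<in> T d; \<not> is_monomial t3\<rbrakk>
          \<Longrightarrow> Node (\<lambda>_. 0) {#(0, t1), (0, t2), (0, t3)#} \<in> T d"

primrec hom :: "real \<Rightarrow> real \<Rightarrow> nat \<Rightarrow> sym \<Rightarrow> real" where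
  "hom s \<kappa> d Xi = - s - 3/2 - \<kappa>"
| "hom s \<kappa> d (Node k M) =
     2 * s * real (k 0) + (\<Sum>i=1..d. real (k i))
     + sum_mset (image_mset (\<lambda>(j, h). h + 2 * s - (if j = 0 then 0 else 1))
                   (image_mset (map_prod id (hom s \<kappa> d)) M))"

end

theory Submission
  imports Defs
begin

primrec msz :: "nat \<Rightarrow> sym \<Rightarrow> nat" where
  "msz d Xi = 0"
| "msz d (Node k M) = 1 + k 0 + (\<Sum>i=1..d. k i)
     + sum_mset (image_mset snd (image_mset (map_prod id (msz d)) M))"

definition Kset :: "nat \<Rightarrow> nat \<Rightarrow> (nat \<Rightarrow> nat) set" where
  "Kset d n = {k. \<forall>i. (i \<in> {..d} \<longrightarrow> k i \<in> {..n}) \<and> (i \<notin> {..d} \<longrightarrow> k i = 0)}"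

definition Ms :: "'a set \<Rightarrow> 'a multiset set" where
  "Ms A = {{#}} \<union> (\<lambda>x. {#x#}) ` A \<union> (\<lambda>(x,y). {#x,y#}) ` (A \<times> A)
     \<union> (\<lambda>(x,y,z). {#x,y,z#}) ` (A \<times> A \<times> A)"

primrec U :: "nat \<Rightarrow> nat \<Rightarrow> sym set" where
  "U d 0 = {Xi}"
| "U d (Suc n) = {Xi} \<union> (\<lambda>(k,M). Node k M) ` (Kset d n \<times> Ms ({..d} \<times> U d n))"

lemma finite_Kset: "finite (Kset d n)"
  unfolding Kset_def by (rule finite_set_of_finite_funs) auto

lemma finite_Ms: "finite A \<Longrightarrow> finite (Ms A)"
  unfolding Ms_def by auto

lemma finite_U: "finite (U d n)"
  by (induction n) (auto simp: finite_Kset finite_Ms)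

lemma Kset_I:
  assumes "valid_exp d k" "k 0 + (\<Sum>i=1..d. k i) \<le> n"
  shows "k \<in> Kset d n"
proof -
  have "k i \<le> n" if "i \<le> d" for i
  proof (cases "i = 0")
    case True then show ?thesis using assms(2) by simp
  next
    case False
    then have "k i \<le> (\<Sum>i=1..d. k i)" using that by (intro member_le_sum) auto
    then show ?thesis using assms(2) by simp
  qed
  then show ?thesis using assms(1) unfolding Kset_def valid_exp_def by auto
qed

lemma in_U: "\<tau> \<in> T d \<Longrightarrow> \<forall>n. msz d \<tau> \<le> n \<longrightarrow> \<tau> \<in> U d n"
proof (induction rule: T.induct)
  case T_Xi
  then show ?case by (intro allI, case_tac n) auto
next
  case (T_mono k)
  show ?case
  proof (intro allI impI)
    fix n assume h: "msz d (monomial k) \<le> n"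
    then obtain n' where n: "n = Suc n'" by (cases n) (auto simp: monomial_def)
    have "k \<in> Kset d n'" using h n T_mono by (intro Kset_I) (auto simp: monomial_def)
    moreover have "{#} \<in> Ms ({..d} \<times> U d n')" by (simp add: Ms_def)
    ultimately show "monomial k \<in> U d n" using n by (force simp: monomial_def)
  qed
next
  case (T_I k t1)
  show ?case
  proof (intro allI impI)
    fix n assume h: "msz d (Node k {#(0, t1)#}) \<le> n"
    then obtain n' where n: "n = Suc n'" by (cases n) auto
    have "k \<in> Kset d n'" using h n T_I by (intro Kset_I) auto
    moreover have "t1 \<in> U d n'" using T_I h n by auto
    then have "{#(0,t1)#} \<in> Ms ({..d} \<times> U d n')" by (simp add: Ms_def)
    ultimately show "Node k {#(0, t1)#} \<in> U d n" using n by force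
  qed
next
  case (T_Ij k j t1)
  show ?case
  proof (intro allI impI)
    fix n assume h: "msz d (Node k {#(j, t1)#}) \<le> n"
    then obtain n' where n: "n = Suc n'" by (cases n) auto
    have "k \<in> Kset d n'" using h n T_Ij by (intro Kset_I) auto
    moreover have "t1 \<in> U d n'" using T_Ij h n by auto
    then have "{#(j,t1)#} \<in> Ms ({..d} \<times> U d n')" using T_Ij by (simp add: Ms_def)
    ultimately show "Node k {#(j, t1)#} \<in> U d n" using n by force
  qed
next
  case (T_II k t1 t2)
  show ?case
  proof (intro allI impI)
    fix n assume h: "msz d (Node k {#(0, t1), (0, t2)#}) \<le> n"
    then obtain n' where n: "n = Suc n'" by (cases n) auto
    have "k \<in> Kset d n'" using h n T_II by (intro Kset_I) auto
    moreover have "t1 \<in> U d n'" "t2 \<in> U d n'" using T_II h n by auto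
    then have "{#(0,t1),(0,t2)#} \<in> Ms ({..d} \<times> U d n')"
      unfolding Ms_def by (intro UnI1 UnI2) (rule image_eqI[where x="((0,t1),(0,t2))"], auto)
    ultimately show "Node k {#(0, t1), (0, t2)#} \<in> U d n" using n by force
  qed
next
  case (T_III t1 t2 t3)
  show ?case
  proof (intro allI impI)
    fix n assume h: "msz d (Node (\<lambda>_. 0) {#(0, t1), (0, t2), (0, t3)#}) \<le> n"
    then obtain n' where n: "n = Suc n'" by (cases n) auto
    have "(\<lambda>_. 0) \<in> Kset d n'" by (simp add: Kset_def)
    moreover have "t1 \<in> U d n'" "t2 \<in> U d n'" "t3 \<in> U d n'" using T_III h n by auto
    then have "{#(0,t1),(0,t2),(0,t3)#} \<in> Ms ({..d} \<times> U d n')"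
      unfolding Ms_def by (intro UnI2) (rule image_eqI[where x="((0,t1),(0,t2),(0,t3))"], auto)
    ultimately show "Node (\<lambda>_. 0) {#(0, t1), (0, t2), (0, t3)#} \<in> U d n" using n by force
  qed
qed


lemma deg_bound:
  fixes c s :: real
  assumes "0 \<le> c" "c \<le> 2*s" "c \<le> 1"
  shows "c * real (k 0 + (\<Sum>i=1..d. k i)) \<le> 2 * s * real (k 0) + (\<Sum>i=1..d. real (k i))"
proof -
  have "c * real (k 0) \<le> 2 * s * real (k 0)" using assms by (intro mult_right_mono) auto
  moreover have "c * (\<Sum>i=1..d. real (k i)) \<le> (\<Sum>i=1..d. real (k i))"
    using assms by (intro mult_left_le_one_le sum_nonneg) auto
  ultimately show ?thesis by (simp add: distrib_left)
qed

lemma hom_bound: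
  fixes s \<kappa> :: real
  assumes s1: "3/4 < s" and s2: "s < 1" and k1: "0 < \<kappa>" and k2: "\<kappa> < 2*s - 3/2"
  shows "\<tau> \<in> T d \<Longrightarrow> (4*s - 3 - 2*\<kappa>) * real (msz d \<tau>) \<le> hom s \<kappa> d \<tau> + s + 3/2 + \<kappa>"
proof (induction rule: T.induct)
  case T_Xi
  then show ?case by simp
next
  case (T_mono k)
  have "(4*s - 3 - 2*\<kappa>) * real (k 0 + (\<Sum>i=1..d. k i)) \<le> 2 * s * real (k 0) + (\<Sum>i=1..d. real (k i))"
    using assms by (intro deg_bound) auto
  then show ?case using assms by (simp add: monomial_def distrib_left)
next
  case (T_I k t1)
  have "(4*s - 3 - 2*\<kappa>) * real (k 0 + (\<Sum>i=1..d. k i)) \<le> 2 * s * real (k 0) + (\<Sum>i=1..d. real (k i))"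
    using assms by (intro deg_bound) auto
  then show ?case using assms T_I by (simp add: distrib_left)
next
  case (T_Ij k j t1)
  have "(4*s - 3 - 2*\<kappa>) * real (k 0 + (\<Sum>i=1..d. k i)) \<le> 2 * s * real (k 0) + (\<Sum>i=1..d. real (k i))"
    using assms by (intro deg_bound) auto
  then show ?case using assms T_Ij by (simp add: distrib_left)
next
  case (T_II k t1 t2)
  have "(4*s - 3 - 2*\<kappa>) * real (k 0 + (\<Sum>i=1..d. k i)) \<le> 2 * s * real (k 0) + (\<Sum>i=1..d. real (k i))"
    using assms by (intro deg_bound) auto
  then show ?case using assms T_II by (simp add: distrib_left)
next
  case (T_III t1 t2 t3)
  then show ?case using assms by (simp add: distrib_left)
qed

theorem lemma2p2:
  fixes s :: real and d :: nat
  assumes "1 \<le> d" and "0 < s" and "s < 1"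
  shows "(s \<le> 3/4 \<longrightarrow>
            (\<forall>\<kappa>>0. \<exists>\<tau>\<in>T d - {Xi}. hom s \<kappa> d \<tau> \<le> hom s \<kappa> d Xi))
       \<and> (3/4 < s \<longrightarrow>
            (\<exists>\<kappa>0>0. \<forall>\<kappa>. 0 < \<kappa> \<and> \<kappa> < \<kappa>0 \<longrightarrow>
               (\<forall>\<tau>\<in>T d - {Xi}. hom s \<kappa> d Xi < hom s \<kappa> d \<tau>)
               \<and> (\<forall>\<beta>::real. finite {\<tau>\<in>T d. hom s \<kappa> d \<tau> < \<beta>})))"
proof (intro conjI impI)
  assume s: "s \<le> 3/4"
  show "\<forall>\<kappa>>0. \<exists>\<tau>\<in>T d - {Xi}. hom s \<kappa> d \<tau> \<le> hom s \<kappa> d Xi"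
  proof (intro allI impI)
    fix \<kappa> :: real assume "0 < \<kappa>"
    let ?t = "Node (\<lambda>_. 0) {#(0, Xi), (0, Xi), (0, Xi)#}"
    have "?t \<in> T d" by (intro T.intros) (auto simp: is_monomial_def monomial_def)
    moreover have "hom s \<kappa> d ?t \<le> hom s \<kappa> d Xi" using s \<open>0 < \<kappa>\<close> by simp
    ultimately show "\<exists>\<tau>\<in>T d - {Xi}. hom s \<kappa> d \<tau> \<le> hom s \<kappa> d Xi" by force
  qed
next
  assume s: "3/4 < s"
  show "\<exists>\<kappa>0>0. \<forall>\<kappa>. 0 < \<kappa> \<and> \<kappa> < \<kappa>0 \<longrightarrow>
               (\<forall>\<tau>\<in>T d - {Xi}. hom s \<kappa> d Xi < hom s \<kappa> d \<tau>)
               \<and> (\<forall>\<beta>::real. finite {\<tau>\<in>T d. hom s \<kappa> d \<tau> < \<beta>})"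
  proof (intro exI[where x="2*s - 3/2"] conjI allI impI)
    show "0 < 2*s - 3/2" using s by simp
  next
    fix \<kappa> :: real assume k: "0 < \<kappa> \<and> \<kappa> < 2*s - 3/2"
    define c where "c = 4*s - 3 - 2*\<kappa>"
    have c: "0 < c" using k c_def by simp
    have B: "\<And>\<tau>. \<tau> \<in> T d \<Longrightarrow> c * real (msz d \<tau>) \<le> hom s \<kappa> d \<tau> + s + 3/2 + \<kappa>"
      unfolding c_def using hom_bound s assms k by blast
    show "\<forall>\<tau>\<in>T d - {Xi}. hom s \<kappa> d Xi < hom s \<kappa> d \<tau>"
    proof
      fix \<tau> assume t: "\<tau> \<in> T d - {Xi}"
      then obtain k M where "\<tau> = Node k M" by (cases \<tau>) auto
      then have "1 \<le> msz d \<tau>" by simp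
      then have "c \<le> c * real (msz d \<tau>)" using c by simp
      then show "hom s \<kappa> d Xi < hom s \<kappa> d \<tau>" using B[of \<tau>] t c by (simp; linarith)
    qed
    fix \<beta> :: real
    define N where "N = nat \<lceil>(\<beta> + s + 3/2 + \<kappa>) / c\<rceil>"
    have "{\<tau>\<in>T d. hom s \<kappa> d \<tau> < \<beta>} \<subseteq> U d N"
    proof
      fix \<tau> assume t: "\<tau> \<in> {\<tau>\<in>T d. hom s \<kappa> d \<tau> < \<beta>}"
      then have "c * real (msz d \<tau>) < \<beta> + s + 3/2 + \<kappa>" using B[of \<tau>] by simp
      then have "real (msz d \<tau>) < (\<beta> + s + 3/2 + \<kappa>) / c" using c by (simp add: field_simps)
      then have "msz d \<tau> \<le> N" unfolding N_def by linarith
      then show "\<tau> \<in> U d N" using in_U t by blast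
    qed
    then show "finite {\<tau>\<in>T d. hom s \<kappa> d \<tau> < \<beta>}" using finite_U finite_subset by blast
  qed
qed

end
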